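(* Let $J\subseteq S$, and define the relation $\Theta$ on $\mathfrak{S}_n^J$ by $(w,w')\in\Theta$ if and only if $\Pi_\downarrow^J(w)=\Pi_\downarrow^J(w')$. Then $\Theta$ is a lattice congruence on the lattice $\mathrm{Weak}(\mathfrak{S}_n^J)=[e,w_\circ^J]$, and the corresponding quotient lattice is (isomorphic to) $\mathcal{T}_n^J$, the set $\mathfrak{S}_n^J(231)$ ordered by $\le_S$.
   Context: $\mathfrak{S}_n$ is the symmetric group on $[n]$, $s_i=(i,i+1)$, $S=\{s_1,\dots,s_{n-1}\}$, one-line notation $w=w_1\cdots w_n$, $\mathrm{inv}(w)=\{(i,j):i<j,\ w_i>w_j\}$, weak order $u\le_S v\iff\mathrm{inv}(u)\subseteq\mathrm{inv}(v)$. For $J\subseteq S$, $\mathfrak{S}_n^J$ is the set of $w$ with $w_i<w_{i+1}$ whenever $s_i\in J$; with the restricted order it is the weak order interval $[e,w_\circ^J]$, where $w_\circ^J$ is the longest element of $\mathfrak{S}_n^J$, and in particular a lattice. Writing $J=S\setminus\{s_{j_1},\dots,s_{j_r}\}$ with $j_1<\dots<j_r$, the $J$-regions are $\{1,\dots,j_1\},\{j_1+1,\dots,j_2\},\dots,\{j_r+1,\dots,n\}$. $\mathfrak{S}_n^J(231)$ is the set of $w\in\mathfrak{S}_n^J$ admitting no indices $i<j<k$ in pairwise different $J$-regions with $w_k<w_i<w_j$ and $w_i=w_k+1$. For $w\in\mathfrak{S}_n^J$, $\Pi_\downarrow^J(w)$ is the unique greatest element of $\mathfrak{S}_n^J(231)$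 that is $\le_S w$ (it exists). A lattice congruence on a lattice $L$ is an equivalence relation $\Theta$ such that $x\,\Theta\,y$ implies $(x\wedge z)\,\Theta\,(y\wedge z)$ and $(x\vee z)\,\Theta\,(y\vee z)$ for all $z\in L$; $L/\Theta$ is the lattice of classes with induced operations. *)

theory Defs
  imports "HOL-Combinatorics.Permutations"
begin

text \<open>Permutations of [n] are functions nat => nat permuting {1..n} (identity elsewhere);
  w i is the i-th letter of the one-line notation. The simple reflection s_i is encoded
  by the index i, so J is a subset of {1..<n}.\<close>

definition Sym :: "nat \<Rightarrow> (nat \<Rightarrow> nat) set" where
  "Sym n = {w. w permutes {1..n}}"

definition inv_set :: "nat \<Rightarrow> (nat \<Rightarrow> nat) \<Rightarrow> (nat \<times> nat) set" where
  "inv_set n w = {(i,j). 1 \<le> i \<and> i < j \<and> j \<le> n \<and> w i > w j}"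

definition weak_le :: "nat \<Rightarrow> (nat \<Rightarrow> nat) \<Rightarrow> (nat \<Rightarrow> nat) \<Rightarrow> bool" where
  "weak_le n u v \<longleftrightarrow> inv_set n u \<subseteq> inv_set n v"

definition SymJ :: "nat \<Rightarrow> nat set \<Rightarrow> (nat \<Rightarrow> nat) set" where
  "SymJ n J = {w \<in> Sym n. \<forall>i\<in>J. w i < w (Suc i)}"

definition same_region :: "nat set \<Rightarrow> nat \<Rightarrow> nat \<Rightarrow> bool" where
  "same_region J i k \<longleftrightarrow> (\<forall>m. min i k \<le> m \<and> m < max i k \<longrightarrow> m \<in> J)"

definition avoids231 :: "nat \<Rightarrow> nat set \<Rightarrow> (nat \<Rightarrow> nat) \<Rightarrow> bool" where
  "avoids231 n J w \<longleftrightarrow> \<not> (\<exists>i j k. 1 \<le> i \<and> i < j \<and> j < k \<and> k \<le> n \<and>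
      \<not> same_region J i j \<and> \<not> same_region J j k \<and> \<not> same_region J i k \<and>
      w k < w i \<and> w i < w j \<and> w i = w k + 1)"

definition SymJ231 :: "nat \<Rightarrow> nat set \<Rightarrow> (nat \<Rightarrow> nat) set" where
  "SymJ231 n J = {w \<in> SymJ n J. avoids231 n J w}"

definition Pi_down :: "nat \<Rightarrow> nat set \<Rightarrow> (nat \<Rightarrow> nat) \<Rightarrow> (nat \<Rightarrow> nat)" where
  "Pi_down n J w = (THE u. u \<in> SymJ231 n J \<and> weak_le n u w \<and>
      (\<forall>v\<in>SymJ231 n J. weak_le n v w \<longrightarrow> weak_le n v u))"

definition Theta :: "nat \<Rightarrow> nat set \<Rightarrow> ((nat \<Rightarrow> nat) \<times> (nat \<Rightarrow> nat)) set" where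
  "Theta n J = {(w,w'). w \<in> SymJ n J \<and> w' \<in> SymJ n J \<and> Pi_down n J w = Pi_down n J w'}"

definition is_meet :: "'a set \<Rightarrow> ('a \<Rightarrow> 'a \<Rightarrow> bool) \<Rightarrow> 'a \<Rightarrow> 'a \<Rightarrow> 'a \<Rightarrow> bool" where
  "is_meet A le x y m \<longleftrightarrow> m \<in> A \<and> le m x \<and> le m y \<and> (\<forall>z\<in>A. le z x \<and> le z y \<longrightarrow> le z m)"

definition is_join :: "'a set \<Rightarrow> ('a \<Rightarrow> 'a \<Rightarrow> bool) \<Rightarrow> 'a \<Rightarrow> 'a \<Rightarrow> 'a \<Rightarrow> bool" where
  "is_join A le x y m \<longleftrightarrow> m \<in> A \<and> le x m \<and> le y m \<and> (\<forall>z\<in>A. le x z \<and> le y z \<longrightarrow> le m z)"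

definition is_lattice :: "'a set \<Rightarrow> ('a \<Rightarrow> 'a \<Rightarrow> bool) \<Rightarrow> bool" where
  "is_lattice A le \<longleftrightarrow>
     (\<forall>x\<in>A. le x x) \<and> (\<forall>x\<in>A. \<forall>y\<in>A. le x y \<and> le y x \<longrightarrow> x = y) \<and>
     (\<forall>x\<in>A. \<forall>y\<in>A. \<forall>z\<in>A. le x y \<and> le y z \<longrightarrow> le x z) \<and>
     (\<forall>x\<in>A. \<forall>y\<in>A. (\<exists>m. is_meet A le x y m) \<and> (\<exists>m. is_join A le x y m))"

definition lattice_congruence :: "'a set \<Rightarrow> ('a \<Rightarrow> 'a \<Rightarrow> bool) \<Rightarrow> ('a \<times> 'a) set \<Rightarrow> bool" where
  "lattice_congruence A le R \<longleftrightarrow> equiv A R \<and>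
     (\<forall>x y z m m'. (x,y) \<in> R \<and> z \<in> A \<and> is_meet A le x z m \<and> is_meet A le y z m' \<longrightarrow> (m,m') \<in> R) \<and>
     (\<forall>x y z m m'. (x,y) \<in> R \<and> z \<in> A \<and> is_join A le x z m \<and> is_join A le y z m' \<longrightarrow> (m,m') \<in> R)"

text \<open>Order of the quotient lattice A/R with induced operations: C \<le> D iff C \<and> D = C,
  i.e. the meet of representatives lies in C.\<close>
definition quot_le :: "'a set \<Rightarrow> ('a \<Rightarrow> 'a \<Rightarrow> bool) \<Rightarrow> 'a set \<Rightarrow> 'a set \<Rightarrow> bool" where
  "quot_le A le C D \<longleftrightarrow> (\<exists>x\<in>C. \<exists>y\<in>D. \<exists>m. is_meet A le x y m \<and> m \<in> C)"

end

theory Submission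
  imports Defs "HOL-Combinatorics.Permutations"
begin

definition cotr :: "(nat \<times> nat) set \<Rightarrow> bool" where
  "cotr U \<longleftrightarrow> (\<forall>i j k. (i,k) \<in> U \<and> i < j \<and> j < k \<longrightarrow> (i,j) \<in> U \<or> (j,k) \<in> U)"

definition rng :: "nat \<Rightarrow> (nat \<times> nat) set \<Rightarrow> bool" where
  "rng n U \<longleftrightarrow> (\<forall>i k. (i,k) \<in> U \<longrightarrow> 1 \<le> i \<and> i < k \<and> k \<le> n)"

definition rfree :: "nat set \<Rightarrow> (nat \<times> nat) set \<Rightarrow> bool" where
  "rfree J U \<longleftrightarrow> (\<forall>i k. (i,k) \<in> U \<longrightarrow> \<not> same_region J i k)"

definition bef :: "(nat \<times> nat) set \<Rightarrow> nat \<Rightarrow> nat \<Rightarrow> bool" where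
  "bef U q p \<longleftrightarrow> (q < p \<and> (q,p) \<notin> U) \<or> (p < q \<and> (p,q) \<in> U)"

definition realz :: "nat \<Rightarrow> (nat \<times> nat) set \<Rightarrow> nat \<Rightarrow> nat" where
  "realz n U p = (if p \<in> {1..n} then Suc (card {q \<in> {1..n}. bef U q p}) else p)"

lemma inv_set_mem: "(i,k) \<in> inv_set n w \<longleftrightarrow> 1 \<le> i \<and> i < k \<and> k \<le> n \<and> w i > w k"
  by (simp add: inv_set_def)

lemma inv_trans: "trans (inv_set n w)"
  unfolding trans_def inv_set_def by auto

lemma inv_cotr: "cotr (inv_set n w)"
  unfolding cotr_def inv_set_def by auto

lemma inv_rng: "rng n (inv_set n w)"
  unfolding rng_def inv_set_def by auto

lemma same_region_sub:
  assumes "same_region J i k" "i \<le> p" "p \<le> q" "q \<le> k"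
  shows "same_region J p q"
  using assms unfolding same_region_def by (auto simp: min_def max_def)

lemma same_region_sym: "same_region J i k \<longleftrightarrow> same_region J k i"
  unfolding same_region_def by (auto simp: min_def max_def)

lemma same_region_join:
  assumes "same_region J i j" "same_region J j k" "i \<le> j" "j \<le> k"
  shows "same_region J i k"
  unfolding same_region_def
proof (intro allI impI)
  fix m assume "min i k \<le> m \<and> m < max i k"
  then have m: "i \<le> m" "m < k" using assms(3,4) by (auto simp: min_def max_def)
  show "m \<in> J"
  proof (cases "m < j")
    case True then show ?thesis using assms(1,3) m unfolding same_region_def by (auto simp: min_def max_def)
  next
    case False then show ?thesis using assms(2,4) m unfolding same_region_def by (auto simp: min_def max_def)
  qed
qed

lemma SymJ_mono:
  assumes "w \<in> SymJ n J" "same_region J i k" "i < k"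
  shows "w i < w k"
  using assms(2,3)
proof (induction k)
  case 0 then show ?case by simp
next
  case (Suc k)
  have kJ: "k \<in> J" using Suc.prems unfolding same_region_def by auto
  have wk: "w k < w (Suc k)" using assms(1) kJ unfolding SymJ_def by auto
  show ?case
  proof (cases "i = k")
    case True then show ?thesis using wk by simp
  next
    case False
    then have "i < k" using Suc.prems by simp
    moreover have "same_region J i k" using same_region_sub[OF Suc.prems(1)] \<open>i<k\<close> by simp
    ultimately show ?thesis using Suc.IH wk by simp
  qed
qed

lemma SymJ_rfree: assumes "w \<in> SymJ n J" shows "rfree J (inv_set n w)"
  unfolding rfree_def
proof (intro allI impI notI)
  fix i k assume "(i,k) \<in> inv_set n w" "same_region J i k"
  then show False using SymJ_mono[OF assms, of i k] by (auto simp: inv_set_def)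
qed

lemma Sym_perm: "w \<in> Sym n \<Longrightarrow> w permutes {1..n}"
  by (simp add: Sym_def)

lemma Sym_range: "w \<in> Sym n \<Longrightarrow> p \<in> {1..n} \<Longrightarrow> w p \<in> {1..n}"
  using permutes_in_image[of w "{1..n}" p] by (simp add: Sym_def)

lemma Sym_inj:
  assumes "w \<in> Sym n" "w p = w q" shows "p = q"
proof -
  have "w permutes {1..n}" using assms(1) by (simp add: Sym_def)
  then have "inj w" by (rule permutes_inj)
  then show ?thesis using assms(2) by (rule injD)
qed

lemma Sym_out: "w \<in> Sym n \<Longrightarrow> p \<notin> {1..n} \<Longrightarrow> w p = p"
  by (simp add: Sym_def permutes_not_in)

lemma SymJ_I:
  assumes "w \<in> Sym n" "rfree J (inv_set n w)" "J \<subseteq> {1..<n}"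
  shows "w \<in> SymJ n J"
proof -
  have "w i < w (Suc i)" if "i \<in> J" for i
  proof -
    have "same_region J i (Suc i)"
    proof (unfold same_region_def, intro allI impI)
      fix m assume "min i (Suc i) \<le> m \<and> m < max i (Suc i)"
      then have "m = i" by auto
      then show "m \<in> J" using that by simp
    qed
    then have "(i, Suc i) \<notin> inv_set n w" using assms(2) unfolding rfree_def by blast
    moreover have "1 \<le> i" "Suc i \<le> n" using that assms(3) by auto
    ultimately have "w i \<le> w (Suc i)" by (auto simp: inv_set_mem)
    moreover have "w i \<noteq> w (Suc i)" using Sym_inj[OF assms(1)] by fastforce
    ultimately show ?thesis by simp
  qed
  then show ?thesis using assms(1) unfolding SymJ_def by auto
qed


lemma bef_irrefl: "\<not> bef U p p" by (simp add: bef_def)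

lemma bef_total: "p \<noteq> q \<Longrightarrow> bef U p q \<or> bef U q p"
  unfolding bef_def by auto

lemma bef_trans:
  assumes "trans U" "cotr U" "bef U p q" "bef U q r"
  shows "bef U p r"
proof -
  have tr: "\<And>a b c. (a,b) \<in> U \<Longrightarrow> (b,c) \<in> U \<Longrightarrow> (a,c) \<in> U"
    using assms(1) unfolding trans_def by blast
  have co: "\<And>a b c. (a,c) \<in> U \<Longrightarrow> a < b \<Longrightarrow> b < c \<Longrightarrow> (a,b) \<in> U \<or> (b,c) \<in> U"
    using assms(2) unfolding cotr_def by blast
  consider (a) "p<q" "(p,q)\<notin>U" "q<r" "(q,r)\<notin>U" | (b) "p<q" "(p,q)\<notin>U" "r<q" "(r,q)\<in>U"
    | (c) "q<p" "(q,p)\<in>U" "q<r" "(q,r)\<notin>U" | (d) "q<p" "(q,p)\<in>U" "r<q" "(r,q)\<in>U"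
    using assms(3,4) unfolding bef_def by blast
  then show ?thesis
  proof cases
    case a then show ?thesis using co[of p r q] unfolding bef_def by auto
  next
    case d then show ?thesis using tr[of r q p] unfolding bef_def by auto
  next
    case b
    consider "p < r" | "r < p" | "p = r" by linarith
    then show ?thesis
    proof cases
      case 1 then show ?thesis using b tr[of p r q] unfolding bef_def by auto
    next
      case 2 then show ?thesis using b co[of r q p] unfolding bef_def by auto
    next
      case 3 then show ?thesis using b by auto
    qed
  next
    case c
    consider "p < r" | "r < p" | "p = r" by linarith
    then show ?thesis
    proof cases
      case 1 then show ?thesis using c tr[of q p r] unfolding bef_def by auto
    next
      case 2 then show ?thesis using c co[of q p r] unfolding bef_def by auto
    next
      case 3 then show ?thesis using c by auto
    qed
  qed
qed

lemma realz_less: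
  assumes "trans U" "cotr U" "p \<in> {1..n}" "q \<in> {1..n}" "bef U p q"
  shows "realz n U p < realz n U q"
proof -
  have "{x \<in> {1..n}. bef U x p} \<subset> {x \<in> {1..n}. bef U x q}"
  proof
    show "{x \<in> {1..n}. bef U x p} \<subseteq> {x \<in> {1..n}. bef U x q}"
      using bef_trans[OF assms(1,2) _ assms(5)] by blast
    show "{x \<in> {1..n}. bef U x p} \<noteq> {x \<in> {1..n}. bef U x q}"
      using assms(3,5) bef_irrefl by blast
  qed
  then have "card {x \<in> {1..n}. bef U x p} < card {x \<in> {1..n}. bef U x q}"
    by (rule psubset_card_mono[rotated]) simp
  then show ?thesis using assms(3,4) by (simp add: realz_def)
qed

lemma realz_range:
  assumes "p \<in> {1..n}"
  shows "realz n U p \<in> {1..n}"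
proof -
  have "{x \<in> {1..n}. bef U x p} \<subseteq> {1..n} - {p}" using bef_irrefl by blast
  then have "card {x \<in> {1..n}. bef U x p} \<le> card ({1..n} - {p})"
    by (intro card_mono) auto
  also have "\<dots> = n - 1" using assms by simp
  finally show ?thesis using assms by (simp add: realz_def) linarith
qed

lemma realz_Sym:
  assumes "trans U" "cotr U"
  shows "realz n U \<in> Sym n"
proof -
  have inj: "inj_on (realz n U) {1..n}"
  proof (rule inj_onI)
    fix p q assume pq: "p \<in> {1..n}" "q \<in> {1..n}" "realz n U p = realz n U q"
    show "p = q"
    proof (rule ccontr)
      assume "p \<noteq> q"
      then have "bef U p q \<or> bef U q p" by (rule bef_total)
      then show False using realz_less[OF assms] pq by (metis less_irrefl)
    qed
  qed
  have "realz n U ` {1..n} \<subseteq> {1..n}" using realz_range by blast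
  then have "realz n U ` {1..n} = {1..n}" using endo_inj_surj[OF _ _ inj] by simp
  then have "bij_betw (realz n U) {1..n} {1..n}" using inj by (simp add: bij_betw_def)
  then have "realz n U permutes {1..n}"
    by (rule bij_imp_permutes) (auto simp: realz_def)
  then show ?thesis by (simp add: Sym_def)
qed

lemma realz_inv:
  assumes "trans U" "cotr U" "rng n U"
  shows "inv_set n (realz n U) = U"
proof (intro set_eqI iffI)
  fix x assume "x \<in> inv_set n (realz n U)"
  then obtain i k where x: "x = (i,k)" "1 \<le> i" "i < k" "k \<le> n" "realz n U k < realz n U i"
    by (auto simp: inv_set_def)
  show "x \<in> U"
  proof (rule ccontr)
    assume "x \<notin> U"
    then have "bef U i k" using x by (simp add: bef_def)
    then have "realz n U i < realz n U k" using realz_less[OF assms(1,2)] x by simp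
    then show False using x by simp
  qed
next
  fix x assume "x \<in> U"
  then obtain i k where x: "x = (i,k)" "(i,k) \<in> U" by (cases x) auto
  then have r: "1 \<le> i" "i < k" "k \<le> n" using assms(3) unfolding rng_def by blast+
  then have "bef U k i" using x by (simp add: bef_def)
  then have "realz n U k < realz n U i" using realz_less[OF assms(1,2)] r by simp
  then show "x \<in> inv_set n (realz n U)" using x r by (simp add: inv_set_def)
qed

lemma Sym_card:
  assumes "w \<in> Sym n" "p \<in> {1..n}"
  shows "w p = Suc (card {q \<in> {1..n}. w q < w p})"
proof -
  have perm: "w permutes {1..n}" using assms(1) by (simp add: Sym_def)
  have img: "w ` {1..n} = {1..n}" using permutes_image[OF perm] .
  have inj: "inj_on w {1..n}" using permutes_inj[OF perm] by (simp add: inj_on_def inj_def)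
  have "w ` {q \<in> {1..n}. w q < w p} = {v \<in> {1..n}. v < w p}"
  proof
    show "w ` {q \<in> {1..n}. w q < w p} \<subseteq> {v \<in> {1..n}. v < w p}" using img by auto
    show "{v \<in> {1..n}. v < w p} \<subseteq> w ` {q \<in> {1..n}. w q < w p}"
    proof
      fix v assume v: "v \<in> {v \<in> {1..n}. v < w p}"
      then obtain q where "q \<in> {1..n}" "v = w q" using img by (metis (no_types, lifting) imageE mem_Collect_eq)
      then show "v \<in> w ` {q \<in> {1..n}. w q < w p}" using v by auto
    qed
  qed
  also have "\<dots> = {1..<w p}" using Sym_range[OF assms] by auto
  finally have "card {q \<in> {1..n}. w q < w p} = card {1..<w p}"
    using card_image[OF inj_on_subset[OF inj]] by (metis (no_types, lifting) mem_Collect_eq subsetI)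
  then show ?thesis using Sym_range[OF assms] by simp
qed

lemma Sym_realz:
  assumes "w \<in> Sym n"
  shows "realz n (inv_set n w) = w"
proof
  fix p
  show "realz n (inv_set n w) p = w p"
  proof (cases "p \<in> {1..n}")
    case False show ?thesis unfolding realz_def if_not_P[OF False]
      by (rule Sym_out[OF assms False, symmetric])
  next
    case True
    have "{q \<in> {1..n}. bef (inv_set n w) q p} = {q \<in> {1..n}. w q < w p}"
    proof (intro set_eqI iffI)
      fix q assume "q \<in> {q \<in> {1..n}. bef (inv_set n w) q p}"
      moreover have ne: "\<forall>q. q \<noteq> p \<longrightarrow> w q \<noteq> w p" using Sym_inj[OF assms] by blast
      ultimately show "q \<in> {q \<in> {1..n}. w q < w p}" using True
        by (auto simp: bef_def inv_set_def)
    next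
      fix q assume "q \<in> {q \<in> {1..n}. w q < w p}"
      then show "q \<in> {q \<in> {1..n}. bef (inv_set n w) q p}" using True
        by (cases q p rule: linorder_cases) (auto simp: bef_def inv_set_def)
    qed
    then have "realz n (inv_set n w) p = Suc (card {q \<in> {1..n}. w q < w p})"
      using True by (simp add: realz_def)
    also have "\<dots> = w p" by (rule Sym_card[OF assms True, symmetric])
    finally show ?thesis .
  qed
qed

lemma inv_inj:
  assumes "w \<in> Sym n" "w' \<in> Sym n" "inv_set n w = inv_set n w'"
  shows "w = w'"
proof -
  have "w = realz n (inv_set n w)" by (rule Sym_realz[OF assms(1), symmetric])
  also have "\<dots> = realz n (inv_set n w')" using assms(3) by simp
  also have "\<dots> = w'" by (rule Sym_realz[OF assms(2)])
  finally show ?thesis .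
qed

lemma weak_antisym:
  assumes "w \<in> Sym n" "w' \<in> Sym n" "weak_le n w w'" "weak_le n w' w"
  shows "w = w'"
proof (rule inv_inj[OF assms(1,2)])
  show "inv_set n w = inv_set n w'" using assms(3,4) unfolding weak_le_def by (rule subset_antisym)
qed


lemma trancl_incr:
  assumes "\<forall>a b. (a,b) \<in> G \<longrightarrow> a < (b::nat)" "(x,y) \<in> G\<^sup>+"
  shows "x < y"
  using assms(2)
proof (induction rule: trancl_induct)
  case (base y) then show ?case using assms(1) by blast
next
  case (step y z) then show ?case using assms(1) by (meson less_trans)
qed

lemma rng_incr: "rng n G \<Longrightarrow> \<forall>a b. (a,b) \<in> G \<longrightarrow> a < b"
  unfolding rng_def by blast

lemma rng_trancl:
  assumes "rng n G"
  shows "rng n (G\<^sup>+)"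
  unfolding rng_def
proof (intro allI impI)
  fix i k assume "(i,k) \<in> G\<^sup>+"
  then show "1 \<le> i \<and> i < k \<and> k \<le> n"
  proof (induction rule: trancl_induct)
    case (base y) then show ?case using assms unfolding rng_def by blast
  next
    case (step y z) then show ?case using assms unfolding rng_def by (meson less_trans)
  qed
qed

lemma rfree_trancl:
  assumes "rng n G" "rfree J G"
  shows "rfree J (G\<^sup>+)"
  unfolding rfree_def
proof (intro allI impI notI)
  fix x z assume xz: "(x,z) \<in> G\<^sup>+" and sr: "same_region J x z"
  have "(x,z) \<in> G \<or> (\<exists>y. (x,y) \<in> G \<and> (y,z) \<in> G\<^sup>+)" using xz by (meson converse_tranclE)
  then show False
  proof
    assume "(x,z) \<in> G" then show False using assms(2) sr by (auto simp: rfree_def)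
  next
    assume "\<exists>y. (x,y) \<in> G \<and> (y,z) \<in> G\<^sup>+"
    then obtain y where y: "(x,y) \<in> G" "(y,z) \<in> G\<^sup>+" by blast
    have "x < y" using y(1) assms(1) by (auto simp: rng_def)
    moreover have "y < z" using trancl_incr[OF rng_incr[OF assms(1)] y(2)] .
    ultimately have "same_region J x y" using same_region_sub[OF sr, of x y] by simp
    then show False using y(1) assms(2) by (auto simp: rfree_def)
  qed
qed

lemma cotr_trancl:
  assumes "rng n G"
    and gen: "\<And>i j k. (i,k) \<in> G \<Longrightarrow> i < j \<Longrightarrow> j < k \<Longrightarrow> (i,j) \<in> G\<^sup>+ \<or> (j,k) \<in> G\<^sup>+"
  shows "cotr (G\<^sup>+)"
  unfolding cotr_def
proof (intro allI impI)
  fix i j k assume h: "(i,k) \<in> G\<^sup>+ \<and> i < j \<and> j < k"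
  have "(i,k) \<in> G\<^sup>+ \<Longrightarrow> \<forall>j. i < j \<and> j < k \<longrightarrow> (i,j) \<in> G\<^sup>+ \<or> (j,k) \<in> G\<^sup>+"
  proof (induction rule: trancl_induct)
    case (base y) then show ?case using gen by blast
  next
    case (step y z)
    have iy: "i < y" using trancl_incr[OF rng_incr[OF assms(1)] step(1)] .
    show ?case
    proof (intro allI impI)
      fix j assume j: "i < j \<and> j < z"
      consider "j < y" | "j = y" | "y < j" by linarith
      then show "(i,j) \<in> G\<^sup>+ \<or> (j,z) \<in> G\<^sup>+"
      proof cases
        case 1
        then have "(i,j) \<in> G\<^sup>+ \<or> (j,y) \<in> G\<^sup>+" using step.IH j by blast
        then show ?thesis using step(2) by (meson trancl_into_trancl)
      next
        case 2 then show ?thesis using step(1) by simp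
      next
        case 3
        then have "(y,j) \<in> G\<^sup>+ \<or> (j,z) \<in> G\<^sup>+" using gen[OF step(2)] j by blast
        then show ?thesis using step(1) by (meson trancl_trans)
      qed
    qed
  qed
  then show "(i,j) \<in> G\<^sup>+ \<or> (j,k) \<in> G\<^sup>+" using h by blast
qed

lemma SymJ_Sym: "w \<in> SymJ n J \<Longrightarrow> w \<in> Sym n"
  by (simp add: SymJ_def)

lemma lub_SymJ:
  assumes F: "F \<subseteq> SymJ n J" and J: "J \<subseteq> {1..<n}"
  defines "U \<equiv> (\<Union>w\<in>F. inv_set n w)\<^sup>+"
  shows "realz n U \<in> SymJ n J" "inv_set n (realz n U) = U"
    "\<forall>w\<in>F. weak_le n w (realz n U)"
    "\<forall>v\<in>SymJ n J. (\<forall>w\<in>F. weak_le n w v) \<longrightarrow> weak_le n (realz n U) v"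
proof -
  define G where "G = (\<Union>w\<in>F. inv_set n w)"
  have rG: "rng n G" unfolding G_def rng_def using inv_rng unfolding rng_def by blast
  have fG: "rfree J G" unfolding G_def rfree_def using SymJ_rfree F unfolding rfree_def by blast
  have gen: "(i,j) \<in> G\<^sup>+ \<or> (j,k) \<in> G\<^sup>+" if ik: "(i,k) \<in> G" "i < j" "j < k" for i j k
  proof -
    obtain w where "w \<in> F" "(i,k) \<in> inv_set n w" using ik(1) unfolding G_def by blast
    then have "(i,j) \<in> inv_set n w \<or> (j,k) \<in> inv_set n w"
      using inv_cotr ik unfolding cotr_def by blast
    then show ?thesis using \<open>w \<in> F\<close> unfolding G_def by blast
  qed
  have U: "U = G\<^sup>+" by (simp add: U_def G_def)
  have trU: "trans U" by (simp add: U)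
  have coU: "cotr U" using cotr_trancl[OF rG gen] U by simp
  have rU: "rng n U" using rng_trancl[OF rG] U by simp
  have fU: "rfree J U" using rfree_trancl[OF rG fG] U by simp
  show inv: "inv_set n (realz n U) = U" using realz_inv[OF trU coU rU] .
  show "realz n U \<in> SymJ n J"
    using SymJ_I[OF realz_Sym[OF trU coU]] inv fU J by simp
  show "\<forall>w\<in>F. weak_le n w (realz n U)"
  proof
    fix w assume "w \<in> F"
    then have "inv_set n w \<subseteq> G" by (auto simp: G_def)
    also have "G \<subseteq> G\<^sup>+" by auto
    finally have "inv_set n w \<subseteq> G\<^sup>+" .
    then show "weak_le n w (realz n U)" using inv U by (simp add: weak_le_def)
  qed
  show "\<forall>v\<in>SymJ n J. (\<forall>w\<in>F. weak_le n w v) \<longrightarrow> weak_le n (realz n U) v"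
  proof (intro ballI impI)
    fix v assume v: "v \<in> SymJ n J" "\<forall>w\<in>F. weak_le n w v"
    then have "G \<subseteq> inv_set n v" unfolding G_def weak_le_def by blast
    then have "G\<^sup>+ \<subseteq> (inv_set n v)\<^sup>+" by (rule trancl_mono_subset)
    also have "\<dots> = inv_set n v" using trancl_id[OF inv_trans] .
    finally have "G\<^sup>+ \<subseteq> inv_set n v" .
    then show "weak_le n (realz n U) v" using inv U by (simp add: weak_le_def)
  qed
qed

lemma is_lattice_SymJ:
  assumes J: "J \<subseteq> {1..<n}"
  shows "is_lattice (SymJ n J) (weak_le n)"
  unfolding is_lattice_def
proof (intro conjI ballI impI)
  fix x assume "x \<in> SymJ n J" then show "weak_le n x x" by (simp add: weak_le_def)
next
  fix x y assume "x \<in> SymJ n J" "y \<in> SymJ n J" "weak_le n x y \<and> weak_le n y x"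
  then show "x = y" using weak_antisym SymJ_Sym by blast
next
  fix x y z assume "weak_le n x y \<and> weak_le n y z" then show "weak_le n x z"
    by (auto simp: weak_le_def)
next
  fix x y assume xy: "x \<in> SymJ n J" "y \<in> SymJ n J"
  define F where "F = {u \<in> SymJ n J. weak_le n u x \<and> weak_le n u y}"
  define U where "U = (\<Union>w\<in>F. inv_set n w)\<^sup>+"
  have F: "F \<subseteq> SymJ n J" by (auto simp: F_def)
  note L = lub_SymJ[OF F J, folded U_def]
  have "is_meet (SymJ n J) (weak_le n) x y (realz n U)"
    unfolding is_meet_def using L xy by (auto simp: F_def)
  then show "\<exists>m. is_meet (SymJ n J) (weak_le n) x y m" by blast
next
  fix x y assume xy: "x \<in> SymJ n J" "y \<in> SymJ n J"
  define F where "F = {x, y}"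
  define U where "U = (\<Union>w\<in>F. inv_set n w)\<^sup>+"
  have F: "F \<subseteq> SymJ n J" using xy by (auto simp: F_def)
  note L = lub_SymJ[OF F J, folded U_def]
  have "is_join (SymJ n J) (weak_le n) x y (realz n U)"
    unfolding is_join_def using L xy by (auto simp: F_def)
  then show "\<exists>m. is_join (SymJ n J) (weak_le n) x y m" by blast
qed

lemma join_inv:
  assumes J: "J \<subseteq> {1..<n}" and xz: "x \<in> SymJ n J" "z \<in> SymJ n J"
    and m: "is_join (SymJ n J) (weak_le n) x z m"
  shows "inv_set n m = (inv_set n x \<union> inv_set n z)\<^sup>+"
proof -
  define F where "F = {x, z}"
  define U where "U = (\<Union>w\<in>F. inv_set n w)\<^sup>+"
  have F: "F \<subseteq> SymJ n J" using xz by (auto simp: F_def)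
  note L = lub_SymJ[OF F J, folded U_def]
  have U: "U = (inv_set n x \<union> inv_set n z)\<^sup>+" by (simp add: U_def F_def)
  have "weak_le n m (realz n U)" using m L unfolding is_join_def by (auto simp: F_def)
  moreover have "weak_le n (realz n U) m" using m L unfolding is_join_def by (auto simp: F_def)
  ultimately show ?thesis using L(2) U unfolding weak_le_def by auto
qed


definition runS :: "nat set \<Rightarrow> (nat \<times> nat) set \<Rightarrow> (nat \<times> nat) set" where
  "runS J T = {(i,m). i < m \<and> \<not> same_region J i m \<and>
     (\<forall>q. i < q \<and> q \<le> m \<and> \<not> same_region J i q \<longrightarrow> (i,q) \<in> T)}"

definition pd :: "nat \<Rightarrow> nat set \<Rightarrow> (nat \<Rightarrow> nat) \<Rightarrow> (nat \<Rightarrow> nat)" where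
  "pd n J w = realz n ((runS J (inv_set n w))\<^sup>+)"

lemma runS_sub: "runS J T \<subseteq> T"
  unfolding runS_def by auto

lemma runS_mono: "T \<subseteq> T' \<Longrightarrow> runS J T \<subseteq> runS J T'"
  unfolding runS_def by blast

lemma rng_sub: "rng n T \<Longrightarrow> G \<subseteq> T \<Longrightarrow> rng n G"
  unfolding rng_def by blast

lemma rfree_sub: "rfree J T \<Longrightarrow> G \<subseteq> T \<Longrightarrow> rfree J G"
  unfolding rfree_def by blast

lemma runS_gen:
  assumes w: "w \<in> SymJ n J" and im: "(i,m) \<in> runS J (inv_set n w)" and ij: "i < j" "j < m"
  shows "(i,j) \<in> (runS J (inv_set n w))\<^sup>+ \<or> (j,m) \<in> (runS J (inv_set n w))\<^sup>+"
proof (cases "same_region J i j")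
  case False
  then have "(i,j) \<in> runS J (inv_set n w)" using im ij unfolding runS_def by auto
  then show ?thesis by auto
next
  case True
  have nsm: "\<not> same_region J j m"
    using im True same_region_join[of J i j m] ij unfolding runS_def by auto
  have "(j,q) \<in> inv_set n w" if q: "j < q" "q \<le> m" "\<not> same_region J j q" for q
  proof -
    have "\<not> same_region J i q"
      using same_region_sub[of J i q j q] q ij by auto
    then have iq: "(i,q) \<in> inv_set n w" using im q ij unfolding runS_def by auto
    have "w i < w j" using SymJ_mono[OF w True ij(1)] .
    then show ?thesis using iq q ij by (auto simp: inv_set_def)
  qed
  then have "(j,m) \<in> runS J (inv_set n w)" using nsm ij unfolding runS_def by auto
  then show ?thesis by auto
qed

lemma pd_basic:
  assumes w: "w \<in> SymJ n J" and J: "J \<subseteq> {1..<n}"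
  shows "pd n J w \<in> SymJ n J" "inv_set n (pd n J w) = (runS J (inv_set n w))\<^sup>+"
    "(runS J (inv_set n w))\<^sup>+ \<subseteq> inv_set n w"
proof -
  define G where "G = runS J (inv_set n w)"
  have rG: "rng n G" using rng_sub[OF inv_rng runS_sub] G_def by simp
  have sub: "G\<^sup>+ \<subseteq> inv_set n w"
  proof -
    have "G\<^sup>+ \<subseteq> (inv_set n w)\<^sup>+" using runS_sub G_def by (metis trancl_mono_subset)
    then show ?thesis using trancl_id[OF inv_trans] by simp
  qed
  have coU: "cotr (G\<^sup>+)" using cotr_trancl[OF rG] runS_gen[OF w] G_def by blast
  have rU: "rng n (G\<^sup>+)" using rng_trancl[OF rG] .
  have fU: "rfree J (G\<^sup>+)" using rfree_sub[OF SymJ_rfree[OF w] sub] .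
  have inv: "inv_set n (realz n (G\<^sup>+)) = G\<^sup>+" using realz_inv[OF trans_trancl coU rU] .
  show "inv_set n (pd n J w) = (runS J (inv_set n w))\<^sup>+" using inv by (simp add: pd_def G_def)
  show "pd n J w \<in> SymJ n J"
    using SymJ_I[OF realz_Sym[OF trans_trancl coU]] inv fU J by (simp add: pd_def G_def)
  show "(runS J (inv_set n w))\<^sup>+ \<subseteq> inv_set n w" using sub G_def by simp
qed

lemma pd_avoids:
  assumes w: "w \<in> SymJ n J" and J: "J \<subseteq> {1..<n}"
  shows "avoids231 n J (pd n J w)"
  unfolding avoids231_def
proof
  define a where "a = pd n J w"
  define G where "G = runS J (inv_set n w)"
  have inv: "inv_set n a = G\<^sup>+" using pd_basic(2)[OF w J] by (simp add: a_def G_def)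
  assume "\<exists>i j k. 1 \<le> i \<and> i < j \<and> j < k \<and> k \<le> n \<and>
      \<not> same_region J i j \<and> \<not> same_region J j k \<and> \<not> same_region J i k \<and>
      pd n J w k < pd n J w i \<and> pd n J w i < pd n J w j \<and> pd n J w i = pd n J w k + 1"
  then obtain i j k where h: "1 \<le> i" "i < j" "j < k" "k \<le> n" "\<not> same_region J i j"
     "a k < a i" "a i < a j" "a i = a k + 1"
    unfolding a_def by blast
  have "(i,k) \<in> G\<^sup>+" using h inv[symmetric] by (auto simp: inv_set_def)
  then have "(i,k) \<in> G \<or> (\<exists>p. (i,p) \<in> G \<and> (p,k) \<in> G\<^sup>+)" by (meson converse_tranclE)
  then show False
  proof
    assume "(i,k) \<in> G"
    then have "(i,j) \<in> G" using h unfolding G_def runS_def by auto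
    then have "(i,j) \<in> inv_set n a" using inv by auto
    then show False using h by (auto simp: inv_set_def)
  next
    assume "\<exists>p. (i,p) \<in> G \<and> (p,k) \<in> G\<^sup>+"
    then obtain p where "(i,p) \<in> G" "(p,k) \<in> G\<^sup>+" by blast
    then have "(i,p) \<in> inv_set n a" "(p,k) \<in> inv_set n a" using inv by auto
    then show False using h by (auto simp: inv_set_def)
  qed
qed

lemma avoid_runS:
  assumes b: "b \<in> SymJ231 n J"
  shows "inv_set n b \<subseteq> (runS J (inv_set n b))\<^sup>+"
proof
  fix x assume "x \<in> inv_set n b"
  then obtain i k where x: "x = (i,k)" "(i,k) \<in> inv_set n b" by (cases x) auto
  define T where "T = inv_set n b"
  define G where "G = runS J T"
  have bJ: "b \<in> SymJ n J" and av: "avoids231 n J b" using b by (auto simp: SymJ231_def)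
  have bS: "b \<in> Sym n" using bJ by (simp add: SymJ_def)
  have "(i,k) \<in> T \<Longrightarrow> (i,k) \<in> G\<^sup>+"
  proof (induction "k - i" arbitrary: i k rule: less_induct)
    case less
    have ik: "1 \<le> i" "i < k" "k \<le> n" "b k < b i" using less.prems by (auto simp: T_def inv_set_def)
    have nsik: "\<not> same_region J i k" using SymJ_rfree[OF bJ] less.prems by (auto simp: rfree_def T_def)
    show ?case
    proof (cases "\<forall>q. i < q \<and> q \<le> k \<and> \<not> same_region J i q \<longrightarrow> (i,q) \<in> T")
      case True
      then have "(i,k) \<in> G" using ik nsik by (auto simp: G_def runS_def)
      then show ?thesis by auto
    next
      case notrun: False
      show ?thesis
      proof (cases "\<exists>m. i < m \<and> m < k \<and> (i,m) \<in> T \<and> (m,k) \<in> T")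
        case True
        then obtain m where m: "i < m" "m < k" "(i,m) \<in> T" "(m,k) \<in> T" by blast
        have "(i,m) \<in> G\<^sup>+" using less.hyps[of m i] m by simp
        moreover have "(m,k) \<in> G\<^sup>+" using less.hyps[of k m] m by simp
        ultimately show ?thesis by (rule trancl_trans)
      next
        case nob0: False
        have nob: "\<not> (b k < b m \<and> b m < b i)" if "i < m" "m < k" for m
          using nob0 that ik by (auto simp: T_def inv_set_def)
        obtain g where g: "i < g" "g \<le> k" "\<not> same_region J i g" "(i,g) \<notin> T" using notrun by blast
        have gk: "g < k" using g less.prems by (cases "g = k") auto
        have bgi: "b i < b g"
        proof -
          have "\<not> b g < b i" using g gk ik by (auto simp: T_def inv_set_def)
          moreover have "b g \<noteq> b i" using Sym_inj[OF bS, of g i] g by auto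
          ultimately show ?thesis by simp
        qed
        define K where "K = {k' \<in> {1..n}. g < k' \<and> b k \<le> b k' \<and> b k' < b i}"
        have kK: "k \<in> K" using ik gk by (auto simp: K_def)
        have finK: "finite K" by (simp add: K_def)
        define v where "v = Max (b ` K)"
        have "v \<in> b ` K" unfolding v_def using finK kK by (intro Max_in) auto
        then obtain k' where k': "k' \<in> K" "b k' = v" by blast
        have vmax: "b x \<le> b k'" if "x \<in> K" for x
          using k' finK that unfolding v_def by (simp add: Max_ge)
        have k'p: "1 \<le> k'" "k' \<le> n" "g < k'" "b k \<le> b k'" "b k' < b i" using k' by (auto simp: K_def)
        have "b k' + 1 \<in> {1..n}"
        proof -
          have "b i \<in> {1..n}" using Sym_range[OF bS] ik by auto
          then show ?thesis using k'p by auto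
        qed
        then obtain i' where i': "i' \<in> {1..n}" "b i' = b k' + 1"
          using permutes_image[OF Sym_perm[OF bS]] by (metis imageE)
        have bi'i: "b i' \<le> b i" using i' k'p by simp
        have i'g: "i' < g"
        proof (rule ccontr)
          assume "\<not> i' < g"
          moreover have "i' \<noteq> g" using bi'i bgi by auto
          ultimately have gi': "g < i'" by simp
          show False
          proof (cases "b i' = b i")
            case True
            then have "i' = i" using Sym_inj[OF bS] by blast
            then show False using gi' g by simp
          next
            case False
            then have "i' \<in> K" using i' k'p bi'i gi' by (auto simp: K_def)
            then show False using vmax i' by fastforce
          qed
        qed
        have ns1: "\<not> same_region J i' g"
        proof (cases "i' = i")
          case True then show ?thesis using g by simp
        next
          case False
          then have "b i' \<noteq> b i" using Sym_inj[OF bS] by blast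
          then have lt: "b k < b i'" "b i' < b i" using bi'i i' k'p by auto
          have "i' \<noteq> k" using lt by auto
          have "\<not> (i < i' \<and> i' < k)" using nob lt by blast
          then have "i' < i" using i'g gk False by linarith
          then show ?thesis using g(3) same_region_sub[of J i' g i g] g(1) by auto
        qed
        have ns2: "\<not> same_region J g k'"
        proof
          assume "same_region J g k'"
          then have "b g < b k'" using SymJ_mono[OF bJ] k'p by blast
          then show False using k'p bgi by simp
        qed
        have ns3: "\<not> same_region J i' k'"
        proof
          assume "same_region J i' k'"
          then have "b i' < b k'" using SymJ_mono[OF bJ] k'p i'g by (meson less_trans)
          then show False using i' by simp
        qed
        have "1 \<le> i' \<and> i' < g \<and> g < k' \<and> k' \<le> n \<and>
          \<not> same_region J i' g \<and> \<not> same_region J g k' \<and> \<not> same_region J i' k' \<and>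
          b k' < b i' \<and> b i' < b g \<and> b i' = b k' + 1"
          using i' i'g k'p ns1 ns2 ns3 bi'i bgi by auto
        then show ?thesis using av unfolding avoids231_def by blast
      qed
    qed
  qed
  then show "x \<in> (runS J (inv_set n b))\<^sup>+" using x by (simp add: T_def G_def)
qed

lemma Pi_down_eq:
  assumes w: "w \<in> SymJ n J" and J: "J \<subseteq> {1..<n}"
  shows "Pi_down n J w = pd n J w"
proof -
  have P1: "pd n J w \<in> SymJ231 n J"
    using pd_basic(1)[OF w J] pd_avoids[OF w J] by (simp add: SymJ231_def)
  have P2: "weak_le n (pd n J w) w"
    using pd_basic(2,3)[OF w J] by (simp add: weak_le_def)
  have P3: "weak_le n v (pd n J w)" if v: "v \<in> SymJ231 n J" "weak_le n v w" for v
  proof -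
    have "inv_set n v \<subseteq> (runS J (inv_set n v))\<^sup>+" using avoid_runS[OF v(1)] .
    also have "\<dots> \<subseteq> (runS J (inv_set n w))\<^sup>+"
      using runS_mono[of "inv_set n v" "inv_set n w" J] v(2) by (simp add: weak_le_def trancl_mono_subset)
    finally show ?thesis using pd_basic(2)[OF w J] by (simp add: weak_le_def)
  qed
  show ?thesis unfolding Pi_down_def
  proof (rule the_equality)
    show "pd n J w \<in> SymJ231 n J \<and> weak_le n (pd n J w) w \<and>
      (\<forall>v\<in>SymJ231 n J. weak_le n v w \<longrightarrow> weak_le n v (pd n J w))" using P1 P2 P3 by blast
  next
    fix u assume u: "u \<in> SymJ231 n J \<and> weak_le n u w \<and> (\<forall>v\<in>SymJ231 n J. weak_le n v w \<longrightarrow> weak_le n v u)"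
    have "weak_le n (pd n J w) u" using u P1 P2 by blast
    moreover have "weak_le n u (pd n J w)" using u P3 by blast
    moreover have "u \<in> Sym n" "pd n J w \<in> Sym n" using u P1 by (auto simp: SymJ231_def SymJ_def)
    ultimately show "u = pd n J w" using weak_antisym by blast
  qed
qed

lemma runS_pd:
  assumes w: "w \<in> SymJ n J" and J: "J \<subseteq> {1..<n}"
  shows "runS J (inv_set n (pd n J w)) = runS J (inv_set n w)"
proof -
  define G where "G = runS J (inv_set n w)"
  have inv: "inv_set n (pd n J w) = G\<^sup>+" using pd_basic(2)[OF w J] G_def by simp
  have "runS J (G\<^sup>+) \<subseteq> G" using runS_mono[OF pd_basic(3)[OF w J]] G_def by simp
  moreover have "G \<subseteq> runS J (G\<^sup>+)"
  proof
    fix x assume "x \<in> G"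
    then obtain i m where x: "x = (i,m)" "(i,m) \<in> G" by (cases x) auto
    have "(i,q) \<in> G\<^sup>+" if "i < q" "q \<le> m" "\<not> same_region J i q" for q
    proof -
      have "(i,q) \<in> G" using x(2) that unfolding G_def runS_def by auto
      then show ?thesis by auto
    qed
    then show "x \<in> runS J (G\<^sup>+)" using x unfolding G_def runS_def by auto
  qed
  ultimately show ?thesis using inv G_def by simp
qed


lemma lemC:
  assumes x: "x \<in> SymJ n J" and z: "z \<in> SymJ n J"
    and R: "\<forall>q. i < q \<and> q < m \<and> \<not> same_region J i q \<longrightarrow> (i,q) \<in> (inv_set n x \<union> inv_set n z)\<^sup>+"
    and im: "i < m"
  shows "(i,m) \<in> (inv_set n x \<union> inv_set n z)\<^sup>+ \<longleftrightarrow>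
    (\<exists>p. (p = i \<or> (i < p \<and> p < m \<and> \<not> same_region J i p)) \<and>
       (p,m) \<in> runS J (inv_set n x) \<union> runS J (inv_set n z))"
proof
  define G where "G = inv_set n x \<union> inv_set n z"
  have rG: "rng n G" unfolding G_def rng_def using inv_rng unfolding rng_def by blast
  have fG: "rfree J G" unfolding G_def using SymJ_rfree[OF x] SymJ_rfree[OF z]
    unfolding rfree_def by blast
  assume "(i,m) \<in> (inv_set n x \<union> inv_set n z)\<^sup>+"
  then have imG: "(i,m) \<in> G\<^sup>+" by (simp add: G_def)
  define Cs where "Cs = {p. p < m \<and> (p = i \<or> (i < p \<and> \<not> same_region J i p)) \<and> (p,m) \<in> G}"
  have ne: "Cs \<noteq> {}"
  proof -
    from imG show ?thesis
    proof (cases rule: tranclE)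
      case base then show ?thesis using im by (auto simp: Cs_def)
    next
      case (step p)
      have ip: "i < p" using trancl_incr[OF rng_incr[OF rG] step(1)] .
      have pm: "p < m" using step(2) rG by (auto simp: rng_def)
      have "\<not> same_region J i p" using rfree_trancl[OF rG fG] step(1) by (auto simp: rfree_def)
      then have "p \<in> Cs" using ip pm step(2) by (auto simp: Cs_def)
      then show ?thesis by blast
    qed
  qed
  have fin: "finite Cs" by (rule finite_subset[of _ "{..<m}"]) (auto simp: Cs_def)
  define p0 where "p0 = Max Cs"
  have p0C: "p0 \<in> Cs" unfolding p0_def using Max_in[OF fin ne] .
  have p0max: "q \<le> p0" if "q \<in> Cs" for q unfolding p0_def using Max_ge[OF fin that] .
  obtain T where T: "T = inv_set n x \<or> T = inv_set n z" "(p0,m) \<in> T"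
    using p0C by (auto simp: Cs_def G_def)
  have coT: "cotr T" using T(1) inv_cotr by auto
  have fT: "rfree J T" using T(1) SymJ_rfree[OF x] SymJ_rfree[OF z] by auto
  have TG: "T \<subseteq> G" using T(1) by (auto simp: G_def)
  have p0m: "p0 < m" using p0C by (simp add: Cs_def)
  have c2: "\<not> same_region J p0 m" using fT T(2) by (auto simp: rfree_def)
  have c3: "(p0,q) \<in> T" if q: "p0 < q" "q \<le> m" "\<not> same_region J p0 q" for q
  proof (rule ccontr)
    assume nq: "(p0,q) \<notin> T"
    then have qm: "q < m" using q T(2) by (cases "q = m") auto
    then have "(q,m) \<in> T" using coT nq q T(2) unfolding cotr_def by blast
    moreover have "i < q" using p0C q by (auto simp: Cs_def)
    moreover have "\<not> same_region J i q"
    proof (cases "p0 = i")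
      case True then show ?thesis using q by simp
    next
      case False
      then have "i < p0" "\<not> same_region J i p0" using p0C by (auto simp: Cs_def)
      then show ?thesis using same_region_sub[of J i q i p0] q by auto
    qed
    ultimately have "q \<in> Cs" using qm TG by (auto simp: Cs_def)
    then show False using p0max q by fastforce
  qed
  have "(p0,m) \<in> runS J T" unfolding runS_def using p0m c2 c3 by blast
  then show "\<exists>p. (p = i \<or> (i < p \<and> p < m \<and> \<not> same_region J i p)) \<and>
       (p,m) \<in> runS J (inv_set n x) \<union> runS J (inv_set n z)"
    using p0C T(1) by (auto simp: Cs_def)
next
  assume "\<exists>p. (p = i \<or> (i < p \<and> p < m \<and> \<not> same_region J i p)) \<and>
       (p,m) \<in> runS J (inv_set n x) \<union> runS J (inv_set n z)"
  then obtain p where p: "p = i \<or> (i < p \<and> p < m \<and> \<not> same_region J i p)"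
    "(p,m) \<in> runS J (inv_set n x) \<union> runS J (inv_set n z)" by blast
  have "(p,m) \<in> inv_set n x \<union> inv_set n z" using p(2) runS_sub by blast
  then have pm: "(p,m) \<in> (inv_set n x \<union> inv_set n z)\<^sup>+" by auto
  show "(i,m) \<in> (inv_set n x \<union> inv_set n z)\<^sup>+"
  proof (cases "p = i")
    case True then show ?thesis using pm by simp
  next
    case False
    then have "(i,p) \<in> (inv_set n x \<union> inv_set n z)\<^sup>+" using p(1) R by blast
    then show ?thesis using pm by (rule trancl_trans)
  qed
qed

definition RU :: "nat set \<Rightarrow> (nat \<times> nat) set \<Rightarrow> nat \<Rightarrow> nat \<Rightarrow> bool" where
  "RU J U i k \<longleftrightarrow> (\<forall>q. i < q \<and> q \<le> k \<and> \<not> same_region J i q \<longrightarrow> (i,q) \<in> U)"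

lemma RU_Suc: "RU J U i (Suc k) \<longleftrightarrow> RU J U i k \<and> (i < Suc k \<and> \<not> same_region J i (Suc k) \<longrightarrow> (i, Suc k) \<in> U)"
  unfolding RU_def using le_Suc_eq by auto

lemma runS_RU: "runS J U = {(i,m). i < m \<and> \<not> same_region J i m \<and> RU J U i m}"
  unfolding runS_def RU_def by simp

lemma join_runS:
  assumes x: "x \<in> SymJ n J" and y: "y \<in> SymJ n J" and z: "z \<in> SymJ n J"
    and eq: "runS J (inv_set n x) = runS J (inv_set n y)"
  shows "runS J ((inv_set n x \<union> inv_set n z)\<^sup>+) = runS J ((inv_set n y \<union> inv_set n z)\<^sup>+)"
proof -
  define Ux where "Ux = (inv_set n x \<union> inv_set n z)\<^sup>+"
  define Uy where "Uy = (inv_set n y \<union> inv_set n z)\<^sup>+"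
  have key: "RU J Ux i k \<longleftrightarrow> RU J Uy i k" for i k
  proof (induction k)
    case 0 then show ?case by (simp add: RU_def)
  next
    case (Suc k)
    show ?case
    proof (cases "RU J Ux i k")
      case False then show ?thesis using Suc.IH RU_Suc by blast
    next
      case True
      then have Ry: "RU J Uy i k" using Suc.IH by simp
      have "(i, Suc k) \<in> Ux \<longleftrightarrow> (i, Suc k) \<in> Uy" if "i < Suc k"
      proof -
        have Rx': "\<forall>q. i < q \<and> q < Suc k \<and> \<not> same_region J i q \<longrightarrow> (i,q) \<in> Ux"
          using True unfolding RU_def by auto
        have Ry': "\<forall>q. i < q \<and> q < Suc k \<and> \<not> same_region J i q \<longrightarrow> (i,q) \<in> Uy"
          using Ry unfolding RU_def by auto
        show ?thesis
          using lemC[OF x z Rx'[unfolded Ux_def] that] lemC[OF y z Ry'[unfolded Uy_def] that] eq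
          unfolding Ux_def Uy_def by simp
      qed
      then show ?thesis using True Ry RU_Suc by metis
    qed
  qed
  show ?thesis unfolding runS_RU using key by (simp add: Ux_def Uy_def)
qed


lemma P_props:
  assumes w: "w \<in> SymJ n J" and J: "J \<subseteq> {1..<n}"
  shows "Pi_down n J w \<in> SymJ231 n J" "Pi_down n J w \<in> SymJ n J" "weak_le n (Pi_down n J w) w"
    "\<And>v. v \<in> SymJ231 n J \<Longrightarrow> weak_le n v w \<Longrightarrow> weak_le n v (Pi_down n J w)"
proof -
  have P1: "pd n J w \<in> SymJ231 n J"
    using pd_basic(1)[OF w J] pd_avoids[OF w J] by (simp add: SymJ231_def)
  then show "Pi_down n J w \<in> SymJ231 n J" using Pi_down_eq[OF w J] by simp
  then show "Pi_down n J w \<in> SymJ n J" by (simp add: SymJ231_def)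
  show "weak_le n (Pi_down n J w) w"
    using pd_basic(2,3)[OF w J] Pi_down_eq[OF w J] by (simp add: weak_le_def)
  fix v assume v: "v \<in> SymJ231 n J" "weak_le n v w"
  have "inv_set n v \<subseteq> (runS J (inv_set n v))\<^sup>+" using avoid_runS[OF v(1)] .
  also have "\<dots> \<subseteq> (runS J (inv_set n w))\<^sup>+"
    using runS_mono[of "inv_set n v" "inv_set n w" J] v(2) by (simp add: weak_le_def trancl_mono_subset)
  finally show "weak_le n v (Pi_down n J w)"
    using pd_basic(2)[OF w J] Pi_down_eq[OF w J] by (simp add: weak_le_def)
qed

lemma P_fix:
  assumes a: "a \<in> SymJ231 n J" and J: "J \<subseteq> {1..<n}"
  shows "Pi_down n J a = a"
proof -
  have aJ: "a \<in> SymJ n J" using a by (simp add: SymJ231_def)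
  have "weak_le n a (Pi_down n J a)" using P_props(4)[OF aJ J a] by (simp add: weak_le_def)
  moreover have "weak_le n (Pi_down n J a) a" using P_props(3)[OF aJ J] .
  moreover have "a \<in> Sym n" "Pi_down n J a \<in> Sym n" using aJ P_props(2)[OF aJ J] by (auto simp: SymJ_def)
  ultimately show ?thesis using weak_antisym by blast
qed

lemma P_eq_iff:
  assumes x: "x \<in> SymJ n J" and y: "y \<in> SymJ n J" and J: "J \<subseteq> {1..<n}"
  shows "Pi_down n J x = Pi_down n J y \<longleftrightarrow> runS J (inv_set n x) = runS J (inv_set n y)"
proof
  assume "Pi_down n J x = Pi_down n J y"
  then have "pd n J x = pd n J y" using Pi_down_eq[OF x J] Pi_down_eq[OF y J] by simp
  then show "runS J (inv_set n x) = runS J (inv_set n y)"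
    using runS_pd[OF x J] runS_pd[OF y J] by metis
next
  assume "runS J (inv_set n x) = runS J (inv_set n y)"
  then have "pd n J x = pd n J y" by (simp add: pd_def)
  then show "Pi_down n J x = Pi_down n J y" using Pi_down_eq[OF x J] Pi_down_eq[OF y J] by simp
qed

lemma weak_trans: "weak_le n a b \<Longrightarrow> weak_le n b c \<Longrightarrow> weak_le n a c"
  by (auto simp: weak_le_def)

lemma congruence:
  assumes J: "J \<subseteq> {1..<n}"
  shows "lattice_congruence (SymJ n J) (weak_le n) (Theta n J)"
  unfolding lattice_congruence_def
proof (intro conjI allI impI)
  show "equiv (SymJ n J) (Theta n J)"
    by (rule equivI) (auto simp: Theta_def refl_on_def sym_def trans_def)
next
  fix x y z m m'
  assume h: "(x, y) \<in> Theta n J \<and> z \<in> SymJ n J \<and> is_meet (SymJ n J) (weak_le n) x z m \<and>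
    is_meet (SymJ n J) (weak_le n) y z m'"
  have x: "x \<in> SymJ n J" and y: "y \<in> SymJ n J" and Pxy: "Pi_down n J x = Pi_down n J y"
    using h by (auto simp: Theta_def)
  have z: "z \<in> SymJ n J" using h by simp
  have m: "m \<in> SymJ n J" "weak_le n m x" "weak_le n m z"
    "\<And>u. u \<in> SymJ n J \<Longrightarrow> weak_le n u x \<Longrightarrow> weak_le n u z \<Longrightarrow> weak_le n u m"
    using h unfolding is_meet_def by blast+
  have m': "m' \<in> SymJ n J" "weak_le n m' y" "weak_le n m' z"
    "\<And>u. u \<in> SymJ n J \<Longrightarrow> weak_le n u y \<Longrightarrow> weak_le n u z \<Longrightarrow> weak_le n u m'"
    using h unfolding is_meet_def by blast+
  have A: "weak_le n (Pi_down n J m) (Pi_down n J m')"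
  proof -
    let ?p = "Pi_down n J m"
    have p: "?p \<in> SymJ231 n J" "?p \<in> SymJ n J" "weak_le n ?p m" using P_props[OF m(1) J] by auto
    have "weak_le n ?p x" using weak_trans[OF p(3) m(2)] .
    then have "weak_le n ?p (Pi_down n J x)" using P_props(4)[OF x J p(1)] by simp
    then have "weak_le n ?p y" using Pxy P_props(3)[OF y J] weak_trans by metis
    moreover have "weak_le n ?p z" using weak_trans[OF p(3) m(3)] .
    ultimately have "weak_le n ?p m'" using m'(4) p(2) by blast
    then show ?thesis using P_props(4)[OF m'(1) J p(1)] by simp
  qed
  have B: "weak_le n (Pi_down n J m') (Pi_down n J m)"
  proof -
    let ?p = "Pi_down n J m'"
    have p: "?p \<in> SymJ231 n J" "?p \<in> SymJ n J" "weak_le n ?p m'" using P_props[OF m'(1) J] by auto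
    have "weak_le n ?p y" using weak_trans[OF p(3) m'(2)] .
    then have "weak_le n ?p (Pi_down n J y)" using P_props(4)[OF y J p(1)] by simp
    then have "weak_le n ?p x" using Pxy P_props(3)[OF x J] weak_trans by metis
    moreover have "weak_le n ?p z" using weak_trans[OF p(3) m'(3)] .
    ultimately have "weak_le n ?p m" using m(4) p(2) by blast
    then show ?thesis using P_props(4)[OF m(1) J p(1)] by simp
  qed
  have "Pi_down n J m = Pi_down n J m'"
    using weak_antisym[OF _ _ A B] P_props(2)[OF m(1) J] P_props(2)[OF m'(1) J] by (simp add: SymJ_def)
  then show "(m, m') \<in> Theta n J" using m(1) m'(1) by (simp add: Theta_def)
next
  fix x y z m m'
  assume h: "(x, y) \<in> Theta n J \<and> z \<in> SymJ n J \<and> is_join (SymJ n J) (weak_le n) x z m \<and>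
    is_join (SymJ n J) (weak_le n) y z m'"
  have x: "x \<in> SymJ n J" and y: "y \<in> SymJ n J" and Pxy: "Pi_down n J x = Pi_down n J y"
    using h by (auto simp: Theta_def)
  have z: "z \<in> SymJ n J" using h by simp
  have mS: "m \<in> SymJ n J" "m' \<in> SymJ n J" using h unfolding is_join_def by blast+
  have im: "inv_set n m = (inv_set n x \<union> inv_set n z)\<^sup>+" using join_inv[OF J x z] h by blast
  have im': "inv_set n m' = (inv_set n y \<union> inv_set n z)\<^sup>+" using join_inv[OF J y z] h by blast
  have "runS J (inv_set n x) = runS J (inv_set n y)" using P_eq_iff[OF x y J] Pxy by simp
  then have "runS J (inv_set n m) = runS J (inv_set n m')"
    using join_runS[OF x y z] im im' by simp
  then have "Pi_down n J m = Pi_down n J m'" using P_eq_iff[OF mS J] by simp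
  then show "(m, m') \<in> Theta n J" using mS by (simp add: Theta_def)
qed

lemma class_eq:
  assumes x: "x \<in> SymJ n J"
  shows "Theta n J `` {x} = {y \<in> SymJ n J. Pi_down n J y = Pi_down n J x}"
  using x by (auto simp: Theta_def)

theorem proposition3p18:
  fixes n :: nat and J :: "nat set"
  assumes "J \<subseteq> {1..<n}"
  shows "is_lattice (SymJ n J) (weak_le n) \<and> lattice_congruence (SymJ n J) (weak_le n) (Theta n J)
    \<and> (\<exists>f. bij_betw f (SymJ n J // Theta n J) (SymJ231 n J) \<and>
         (\<forall>C\<in>SymJ n J // Theta n J. \<forall>D\<in>SymJ n J // Theta n J.
            quot_le (SymJ n J) (weak_le n) C D \<longleftrightarrow> weak_le n (f C) (f D)))"
proof (intro conjI)
  note J = assms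
  show "is_lattice (SymJ n J) (weak_le n)" by (rule is_lattice_SymJ[OF J])
  show "lattice_congruence (SymJ n J) (weak_le n) (Theta n J)" by (rule congruence[OF J])
  define f where "f C = Pi_down n J (SOME x. x \<in> C)" for C
  have fcl: "f (Theta n J `` {x}) = Pi_down n J x" if x: "x \<in> SymJ n J" for x
  proof -
    have "x \<in> Theta n J `` {x}" using x by (simp add: class_eq)
    then have "(SOME y. y \<in> Theta n J `` {x}) \<in> Theta n J `` {x}"
      by (rule someI[of "\<lambda>y. y \<in> Theta n J `` {x}"])
    then show ?thesis using x by (simp add: f_def class_eq)
  qed
  have clE: "\<exists>x\<in>SymJ n J. C = Theta n J `` {x}" if "C \<in> SymJ n J // Theta n J" for C
    using that by (auto simp: quotient_def)
  show "\<exists>f. bij_betw f (SymJ n J // Theta n J) (SymJ231 n J) \<and>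
         (\<forall>C\<in>SymJ n J // Theta n J. \<forall>D\<in>SymJ n J // Theta n J.
            quot_le (SymJ n J) (weak_le n) C D \<longleftrightarrow> weak_le n (f C) (f D))"
  proof (intro exI conjI)
    show "bij_betw f (SymJ n J // Theta n J) (SymJ231 n J)"
      unfolding bij_betw_def
    proof (intro conjI)
      show "inj_on f (SymJ n J // Theta n J)"
      proof (rule inj_onI)
        fix C D assume C: "C \<in> SymJ n J // Theta n J" and D: "D \<in> SymJ n J // Theta n J" and fe: "f C = f D"
        obtain c where c: "c \<in> SymJ n J" "C = Theta n J `` {c}" using clE[OF C] by blast
        obtain d where d: "d \<in> SymJ n J" "D = Theta n J `` {d}" using clE[OF D] by blast
        have "Pi_down n J c = Pi_down n J d" using fe fcl c d by simp
        then show "C = D" using c d class_eq by simp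
      qed
      show "f ` (SymJ n J // Theta n J) = SymJ231 n J"
      proof
        show "f ` (SymJ n J // Theta n J) \<subseteq> SymJ231 n J"
        proof
          fix a assume "a \<in> f ` (SymJ n J // Theta n J)"
          then obtain C where C: "C \<in> SymJ n J // Theta n J" "a = f C" by blast
          obtain c where c: "c \<in> SymJ n J" "C = Theta n J `` {c}" using clE[OF C(1)] by blast
          show "a \<in> SymJ231 n J" using C c fcl P_props(1)[OF c(1) J] by simp
        qed
        show "SymJ231 n J \<subseteq> f ` (SymJ n J // Theta n J)"
        proof
          fix a assume a: "a \<in> SymJ231 n J"
          then have aJ: "a \<in> SymJ n J" by (simp add: SymJ231_def)
          have "Theta n J `` {a} \<in> SymJ n J // Theta n J" using aJ by (auto simp: quotient_def)
          moreover have "f (Theta n J `` {a}) = a" using fcl[OF aJ] P_fix[OF a J] by simp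
          ultimately show "a \<in> f ` (SymJ n J // Theta n J)" by (metis imageI)
        qed
      qed
    qed
    show "\<forall>C\<in>SymJ n J // Theta n J. \<forall>D\<in>SymJ n J // Theta n J.
            quot_le (SymJ n J) (weak_le n) C D \<longleftrightarrow> weak_le n (f C) (f D)"
    proof (intro ballI)
      fix C D assume C: "C \<in> SymJ n J // Theta n J" and D: "D \<in> SymJ n J // Theta n J"
      obtain c where c: "c \<in> SymJ n J" "C = Theta n J `` {c}" using clE[OF C] by blast
      obtain d where d: "d \<in> SymJ n J" "D = Theta n J `` {d}" using clE[OF D] by blast
      have fC: "f C = Pi_down n J c" and fD: "f D = Pi_down n J d" using fcl c d by auto
      show "quot_le (SymJ n J) (weak_le n) C D \<longleftrightarrow> weak_le n (f C) (f D)"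
      proof
        assume "quot_le (SymJ n J) (weak_le n) C D"
        then obtain x y m where xy: "x \<in> C" "y \<in> D" "is_meet (SymJ n J) (weak_le n) x y m" "m \<in> C"
          unfolding quot_le_def by blast
        have mS: "m \<in> SymJ n J" and Pm: "Pi_down n J m = Pi_down n J c"
          using xy(4) c class_eq by auto
        have yS: "y \<in> SymJ n J" and Py: "Pi_down n J y = Pi_down n J d"
          using xy(2) d class_eq by auto
        have my: "weak_le n m y" using xy(3) unfolding is_meet_def by blast
        have "weak_le n (Pi_down n J m) y" using weak_trans[OF P_props(3)[OF mS J] my] .
        then have "weak_le n (Pi_down n J m) (Pi_down n J y)"
          using P_props(4)[OF yS J P_props(1)[OF mS J]] by simp
        then show "weak_le n (f C) (f D)" using fC fD Pm Py by simp
      next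
        assume le: "weak_le n (f C) (f D)"
        let ?a = "Pi_down n J c" and ?b = "Pi_down n J d"
        have a: "?a \<in> SymJ231 n J" "?a \<in> SymJ n J" using P_props(1,2)[OF c(1) J] by auto
        have b: "?b \<in> SymJ231 n J" "?b \<in> SymJ n J" using P_props(1,2)[OF d(1) J] by auto
        have aC: "?a \<in> C" using c a P_fix[OF a(1) J] class_eq by auto
        have bD: "?b \<in> D" using d b P_fix[OF b(1) J] class_eq by auto
        have "is_meet (SymJ n J) (weak_le n) ?a ?b ?a"
          unfolding is_meet_def using a(2) le fC fD by (auto simp: weak_le_def)
        then show "quot_le (SymJ n J) (weak_le n) C D"
          unfolding quot_le_def using aC bD by blast
      qed
    qed
  qed
qed

end
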